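(* Let $S$ be a semigroup with finite $\mathcal{R}$-height, let $a\in S$, and let $A=aS^1$. Let $I$ be a set with $|I|\geq 2$, fix $1\in I$, let $T=\mathcal{B}(S,I)$ be the Brandt extension of $S$ by $I$, and let $B=(1,a,1)T^1$. Then $\mathrm{H}_{\mathcal{R}}(T)=\mathrm{H}_{\mathcal{R}}(S)+1$ and $\mathrm{H}_{\mathcal{R}}(B)=\mathrm{H}_{\mathcal{R}}(A)+2$.
   Context: The Brandt extension $\mathcal{B}(S,I)$ of a semigroup $S$ by a non-empty set $I$ is the set $(I\times S\times I)\cup\{0\}$ with multiplication $(i,s,j)(k,t,l)=(i,st,l)$ if $j=k$ and $=0$ otherwise, and $0x=x0=0$ for all $x$. $S^1$ denotes $S$ with an identity adjoined if necessary. Green's preorder: $u\leq_{\mathcal{R}} v$ iff $uS^1\subseteq vS^1$; $\mathcal{R}$ is the associated equivalence; the $\mathcal{R}$-height $\mathrm{H}_{\mathcal{R}}$ of a semigroup is the supremum of cardinalities of chains in its poset of $\mathcal{R}$-classes. For the right ideals $A$ and $B$, the $\mathcal{R}$-height is computed in $A$ and $B$ as semigroups in their own right. *)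

theory Defs
  imports "HOL-Library.Extended_Nat"
begin

definition semigroup_on :: "'a set \<Rightarrow> ('a \<Rightarrow> 'a \<Rightarrow> 'a) \<Rightarrow> bool" where
  "semigroup_on S f \<longleftrightarrow>
     (\<forall>x\<in>S. \<forall>y\<in>S. f x y \<in> S) \<and>
     (\<forall>x\<in>S. \<forall>y\<in>S. \<forall>z\<in>S. f (f x y) z = f x (f y z))"

definition rideal1 :: "'a set \<Rightarrow> ('a \<Rightarrow> 'a \<Rightarrow> 'a) \<Rightarrow> 'a \<Rightarrow> 'a set" where
  "rideal1 S f u = insert u {f u x | x. x \<in> S}"

definition R_le :: "'a set \<Rightarrow> ('a \<Rightarrow> 'a \<Rightarrow> 'a) \<Rightarrow> 'a \<Rightarrow> 'a \<Rightarrow> bool" where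
  "R_le S f u v \<longleftrightarrow> rideal1 S f u \<subseteq> rideal1 S f v"

definition R_equiv :: "'a set \<Rightarrow> ('a \<Rightarrow> 'a \<Rightarrow> 'a) \<Rightarrow> 'a \<Rightarrow> 'a \<Rightarrow> bool" where
  "R_equiv S f u v \<longleftrightarrow> R_le S f u v \<and> R_le S f v u"

definition R_class :: "'a set \<Rightarrow> ('a \<Rightarrow> 'a \<Rightarrow> 'a) \<Rightarrow> 'a \<Rightarrow> 'a set" where
  "R_class S f u = {v \<in> S. R_equiv S f u v}"

definition R_classes :: "'a set \<Rightarrow> ('a \<Rightarrow> 'a \<Rightarrow> 'a) \<Rightarrow> 'a set set" where
  "R_classes S f = R_class S f ` S"

definition R_class_le :: "'a set \<Rightarrow> ('a \<Rightarrow> 'a \<Rightarrow> 'a) \<Rightarrow> 'a set \<Rightarrow> 'a set \<Rightarrow> bool" where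
  "R_class_le S f P Q \<longleftrightarrow> (\<exists>p\<in>P. \<exists>q\<in>Q. R_le S f p q)"

definition R_chains :: "'a set \<Rightarrow> ('a \<Rightarrow> 'a \<Rightarrow> 'a) \<Rightarrow> 'a set set set" where
  "R_chains S f = {K. K \<subseteq> R_classes S f \<and>
      (\<forall>P\<in>K. \<forall>Q\<in>K. R_class_le S f P Q \<or> R_class_le S f Q P)}"

definition R_height :: "'a set \<Rightarrow> ('a \<Rightarrow> 'a \<Rightarrow> 'a) \<Rightarrow> enat" where
  "R_height S f = (SUP K \<in> R_chains S f. if finite K then enat (card K) else \<infinity>)"

text \<open>Brandt extension B(S,I): elements Some (i,s,j) with i,j in I, s in S, and None as zero.\<close>

definition brandt_carrier :: "'a set \<Rightarrow> 'i set \<Rightarrow> ('i \<times> 'a \<times> 'i) option set" where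
  "brandt_carrier S I = insert None {Some (i, s, j) | i s j. i \<in> I \<and> s \<in> S \<and> j \<in> I}"

fun brandt_mult :: "('a \<Rightarrow> 'a \<Rightarrow> 'a) \<Rightarrow> ('i \<times> 'a \<times> 'i) option \<Rightarrow> ('i \<times> 'a \<times> 'i) option
    \<Rightarrow> ('i \<times> 'a \<times> 'i) option" where
  "brandt_mult f (Some (i, s, j)) (Some (k, t, l)) =
     (if j = k then Some (i, f s t, l) else None)"
| "brandt_mult f _ _ = None"

end

theory Submission
  imports Defs
begin


definition schain :: "'a set \<Rightarrow> ('a \<Rightarrow> 'a \<Rightarrow> bool) \<Rightarrow> 'a set set" where
  "schain X le = {C. C \<subseteq> X \<and> (\<forall>x\<in>C. \<forall>y\<in>C. x \<noteq> y \<longrightarrow> (le x y \<or> le y x) \<and> \<not> (le x y \<and> le y x))}"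

definition cval :: "'a set \<Rightarrow> enat" where
  "cval C = (if finite C then enat (card C) else \<infinity>)"

definition Hgt :: "'a set \<Rightarrow> ('a \<Rightarrow> 'a \<Rightarrow> bool) \<Rightarrow> enat" where
  "Hgt X le = (SUP C \<in> schain X le. cval C)"

lemma Hgt_upper0: "C \<in> schain X le \<Longrightarrow> cval C \<le> Hgt X le"
  unfolding Hgt_def by (rule SUP_upper)

lemma R_height_eq: "R_height S f = Hgt S (R_le S f)"
proof (rule order.antisym)
  have cls: "R_class S f u = {v \<in> S. rideal1 S f u = rideal1 S f v}" for u
    unfolding R_class_def R_equiv_def R_le_def by auto
  show "R_height S f \<le> Hgt S (R_le S f)"
    unfolding R_height_def
  proof (rule SUP_least)
    fix K assume K: "K \<in> R_chains S f"
    define r where "r P = (SOME p. p \<in> S \<and> P = R_class S f p)" for P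
    have r: "r P \<in> S \<and> P = R_class S f (r P)" if "P \<in> K" for P
    proof -
      from that K obtain u where "u \<in> S \<and> P = R_class S f u"
        unfolding R_chains_def R_classes_def by auto
      then show ?thesis unfolding r_def by (rule someI)
    qed
    have inj: "inj_on r K"
      by (metis inj_onI r)
    have C1: "r ` K \<subseteq> S" using r by blast
    have C2: "(R_le S f (r P) (r Q) \<or> R_le S f (r Q) (r P)) \<and> \<not> (R_le S f (r P) (r Q) \<and> R_le S f (r Q) (r P))"
      if PQ: "P \<in> K" "Q \<in> K" "r P \<noteq> r Q" for P Q
    proof
      have rP: "\<forall>p\<in>P. rideal1 S f p = rideal1 S f (r P)" using r[OF PQ(1)] cls by auto
      have rQ: "\<forall>p\<in>Q. rideal1 S f p = rideal1 S f (r Q)" using r[OF PQ(2)] cls by auto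
      have "R_class_le S f P Q \<or> R_class_le S f Q P" using K PQ unfolding R_chains_def by blast
      then show "R_le S f (r P) (r Q) \<or> R_le S f (r Q) (r P)"
        unfolding R_class_le_def R_le_def using rP rQ by auto
      show "\<not> (R_le S f (r P) (r Q) \<and> R_le S f (r Q) (r P))"
      proof
        assume "R_le S f (r P) (r Q) \<and> R_le S f (r Q) (r P)"
        then have "rideal1 S f (r P) = rideal1 S f (r Q)" unfolding R_le_def by auto
        then have "R_class S f (r P) = R_class S f (r Q)" unfolding cls by auto
        then show False using r PQ by metis
      qed
    qed
    have C: "r ` K \<in> schain S (R_le S f)"
      unfolding schain_def using C1 C2 by blast
    have "cval (r ` K) = cval K" unfolding cval_def using inj
      by (simp add: card_image finite_image_iff)
    then show "(if finite K then enat (card K) else \<infinity>) \<le> Hgt S (R_le S f)"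
      using Hgt_upper0[OF C] unfolding cval_def[of K] by simp
  qed
  show "Hgt S (R_le S f) \<le> R_height S f"
    unfolding Hgt_def
  proof (rule SUP_least)
    fix C assume C: "C \<in> schain S (R_le S f)"
    have inj: "inj_on (R_class S f) C"
    proof (rule inj_onI)
      fix x y assume "x \<in> C" "y \<in> C" "R_class S f x = R_class S f y"
      then have "y \<in> R_class S f x" using C unfolding cls schain_def by auto
      then have "R_le S f x y \<and> R_le S f y x" unfolding cls R_le_def by auto
      then show "x = y" using C \<open>x \<in> C\<close> \<open>y \<in> C\<close> unfolding schain_def by blast
    qed
    have K: "R_class S f ` C \<in> R_chains S f"
      unfolding R_chains_def R_classes_def R_class_le_def
    proof safe
      fix x assume "x \<in> C" then show "R_class S f x \<in> R_class S f ` S" using C unfolding schain_def by auto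
    next
      fix x y assume xy: "x \<in> C" "y \<in> C" and n: "\<not> (\<exists>p\<in>R_class S f y. \<exists>q\<in>R_class S f x. R_le S f p q)"
      have xS: "x \<in> R_class S f x" "y \<in> R_class S f y" using xy C unfolding schain_def cls by auto
      have "R_le S f x y \<or> R_le S f y x" using C xy unfolding schain_def R_le_def by (cases "x = y") auto
      then show "\<exists>p\<in>R_class S f x. \<exists>q\<in>R_class S f y. R_le S f p q" using xS n by blast
    qed
    have "cval C = (if finite (R_class S f ` C) then enat (card (R_class S f ` C)) else \<infinity>)"
      unfolding cval_def using inj by (simp add: card_image finite_image_iff)
    moreover have "(if finite (R_class S f ` C) then enat (card (R_class S f ` C)) else \<infinity>) \<le> R_height S f"
      unfolding R_height_def by (rule SUP_upper[OF K])
    ultimately show "cval C \<le> R_height S f" by simp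
  qed
qed

lemma transfer:
  assumes D: "D \<in> schain X le1" and Y: "h ` D \<subseteq> Y" and rf: "\<And>z. le2 z z"
    and m: "\<And>x y. x \<in> D \<Longrightarrow> y \<in> D \<Longrightarrow> le1 x y \<Longrightarrow> \<not> le1 y x \<Longrightarrow> le2 (h x) (h y) \<and> \<not> le2 (h y) (h x)"
  shows "h ` D \<in> schain Y le2 \<and> cval (h ` D) = cval D"
proof -
  have st: "x \<noteq> y \<Longrightarrow> x \<in> D \<Longrightarrow> y \<in> D \<Longrightarrow> (le2 (h x) (h y) \<and> \<not> le2 (h y) (h x)) \<or> (le2 (h y) (h x) \<and> \<not> le2 (h x) (h y))" for x y
    using D m unfolding schain_def by blast
  have inj: "inj_on h D"
    by (rule inj_onI) (metis st rf)
  have "h ` D \<in> schain Y le2"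
  proof -
    have "\<forall>x\<in>h ` D. \<forall>y\<in>h ` D. x \<noteq> y \<longrightarrow> (le2 x y \<or> le2 y x) \<and> \<not> (le2 x y \<and> le2 y x)"
    proof (intro ballI impI)
      fix u v assume "u \<in> h ` D" "v \<in> h ` D" "u \<noteq> v"
      then obtain x y where "x \<in> D" "y \<in> D" "u = h x" "v = h y" "x \<noteq> y" by blast
      then show "(le2 u v \<or> le2 v u) \<and> \<not> (le2 u v \<and> le2 v u)" using st by blast
    qed
    then show ?thesis using Y unfolding schain_def by blast
  qed
  moreover have "cval (h ` D) = cval D" unfolding cval_def using inj by (simp add: card_image finite_image_iff)
  ultimately show ?thesis by blast
qed

lemma insert_bottom:
  assumes D: "D \<in> schain X le" and b: "b \<in> X" "b \<notin> D" and l: "\<And>y. y \<in> D \<Longrightarrow> le b y \<and> \<not> le y b"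
  shows "insert b D \<in> schain X le \<and> cval (insert b D) = cval D + 1"
proof -
  have "insert b D \<in> schain X le" using D b l unfolding schain_def by auto
  moreover have "cval (insert b D) = cval D + 1" unfolding cval_def using b
    by (simp add: eSuc_enat[symmetric] plus_1_eSuc)
  ultimately show ?thesis by blast
qed

lemma Hgt_upper: "C \<in> schain X le \<Longrightarrow> cval C \<le> Hgt X le"
  unfolding Hgt_def by (rule SUP_upper)

lemma Hgt_attained:
  assumes "Hgt X le \<noteq> \<infinity>"
  shows "\<exists>C\<in>schain X le. cval C = Hgt X le"
proof -
  have e: "{} \<in> schain X le" unfolding schain_def by auto
  let ?V = "cval ` schain X le"
  have ne: "?V \<noteq> {}" using e by auto
  have "finite ?V" using assms ne unfolding Hgt_def Sup_enat_def by (auto split: if_splits)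
  then have "Sup ?V \<in> ?V" using ne unfolding Sup_enat_def by (simp add: Max_in)
  then show ?thesis unfolding Hgt_def by auto
qed

lemma exists_min:
  assumes "finite C" "C \<noteq> {}" "\<forall>x\<in>C. \<forall>y\<in>C. le x y \<or> le y x"
    and rf: "\<And>z. le z z" and tr: "\<And>x y z. le x y \<Longrightarrow> le y z \<Longrightarrow> le x z"
  shows "\<exists>m\<in>C. \<forall>c\<in>C. le m c"
  using assms(1,2,3)
proof (induction C rule: finite_ne_induct)
  case (singleton x) then show ?case using rf by auto
next
  case (insert x F)
  then obtain m where m: "m \<in> F" "\<forall>c\<in>F. le m c" by auto
  show ?case
  proof (cases "le x m")
    case True then show ?thesis using m rf tr by blast
  next
    case False then have "le m x" using insert m by auto
    then show ?thesis using m by blast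
  qed
qed

lemma rle_refl: "R_le S f z z" unfolding R_le_def by auto
lemma rle_trans: "R_le S f x y \<Longrightarrow> R_le S f y z \<Longrightarrow> R_le S f x z" unfolding R_le_def by auto

lemma rle_iff:
  assumes "semigroup_on X f" "v \<in> X"
  shows "R_le X f u v \<longleftrightarrow> (u = v \<or> (\<exists>x\<in>X. u = f v x))"
proof
  assume "R_le X f u v" then show "u = v \<or> (\<exists>x\<in>X. u = f v x)" unfolding R_le_def rideal1_def by auto
next
  assume h: "u = v \<or> (\<exists>x\<in>X. u = f v x)"
  show "R_le X f u v" unfolding R_le_def rideal1_def
  proof
    fix w assume w: "w \<in> insert u {f u x |x. x \<in> X}"
    show "w \<in> insert v {f v x |x. x \<in> X}"
    proof (cases "u = v")
      case True then show ?thesis using w by auto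
    next
      case False
      then obtain x where x: "x \<in> X" "u = f v x" using h by auto
      { fix y assume "y \<in> X"
        then have "f u y = f v (f x y)" "f x y \<in> X" using assms x unfolding semigroup_on_def by auto }
      then show ?thesis using w x by auto
    qed
  qed
qed

lemma rideal_semigroup:
  assumes "semigroup_on X f" "u \<in> X"
  shows "semigroup_on (rideal1 X f u) f" "rideal1 X f u \<subseteq> X"
proof -
  show sub: "rideal1 X f u \<subseteq> X" using assms unfolding rideal1_def semigroup_on_def by auto
  have "\<forall>x\<in>rideal1 X f u. \<forall>y\<in>rideal1 X f u. f x y \<in> rideal1 X f u"
  proof (intro ballI)
    fix x y assume x: "x \<in> rideal1 X f u" and y: "y \<in> rideal1 X f u"
    then have yX: "y \<in> X" using sub by auto
    show "f x y \<in> rideal1 X f u"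
    proof (cases "x = u")
      case True then show ?thesis using yX unfolding rideal1_def by auto
    next
      case False then obtain z where z: "z \<in> X" "x = f u z" using x unfolding rideal1_def by auto
      then have "f x y = f u (f z y)" "f z y \<in> X" using assms yX unfolding semigroup_on_def by auto
      then show ?thesis unfolding rideal1_def by auto
    qed
  qed
  then show "semigroup_on (rideal1 X f u) f" using assms sub unfolding semigroup_on_def by blast
qed

lemma brandt_cases:
  assumes "x \<in> brandt_carrier S I"
  obtains "x = None" | i s j where "x = Some (i, s, j)" "i \<in> I" "s \<in> S" "j \<in> I"
  using assms unfolding brandt_carrier_def by blast

lemma brandt_semigroup:
  assumes sg: "semigroup_on S f"
  shows "semigroup_on (brandt_carrier S I) (brandt_mult f)"
proof -
  have fS: "f s t \<in> S" if "s \<in> S" "t \<in> S" for s t using sg that unfolding semigroup_on_def by blast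
  have fA: "f (f s t) u = f s (f t u)" if "s \<in> S" "t \<in> S" "u \<in> S" for s t u using sg that unfolding semigroup_on_def by blast
  have cl: "brandt_mult f x y \<in> brandt_carrier S I" if "x \<in> brandt_carrier S I" "y \<in> brandt_carrier S I" for x y
  proof -
    have N: "None \<in> brandt_carrier S I" unfolding brandt_carrier_def by simp
    show ?thesis
    proof (cases rule: brandt_cases[OF that(1)])
      case 1 then show ?thesis using N by simp
    next
      case (2 i s j)
      show ?thesis
      proof (cases rule: brandt_cases[OF that(2)])
        case 1 then show ?thesis using N 2 by simp
      next
        case (2 k t l)
        then show ?thesis using N \<open>x = Some (i, s, j)\<close> \<open>i \<in> I\<close> \<open>s \<in> S\<close> fS
          unfolding brandt_carrier_def by auto
      qed
    qed
  qed
  have as: "brandt_mult f (brandt_mult f x y) z = brandt_mult f x (brandt_mult f y z)"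
    if "x \<in> brandt_carrier S I" "y \<in> brandt_carrier S I" "z \<in> brandt_carrier S I" for x y z
  proof (cases "x = None \<or> y = None \<or> z = None")
    case True
    have n1: "brandt_mult f None w = None" "brandt_mult f w None = None" for w
      by (cases w; auto)+
    from True show ?thesis by (auto simp: n1)
  next
    case False
    from that(1) False obtain i s j where x: "x = Some (i, s, j)" "s \<in> S" by (cases rule: brandt_cases) auto
    from that(2) False obtain k t l where y: "y = Some (k, t, l)" "t \<in> S" by (cases rule: brandt_cases) auto
    from that(3) False obtain p u q where z: "z = Some (p, u, q)" "u \<in> S" by (cases rule: brandt_cases) auto
    show ?thesis using fA x y z by simp
  qed
  show ?thesis unfolding semigroup_on_def using cl as by blast
qed



lemma schain_subset: "D \<in> schain X le \<Longrightarrow> D' \<subseteq> D \<Longrightarrow> D' \<in> schain X le"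
  unfolding schain_def by blast

lemma schain_cmp: "D \<in> schain X le \<Longrightarrow> x \<in> D \<Longrightarrow> y \<in> D \<Longrightarrow> x \<noteq> y \<Longrightarrow> le x y \<or> le y x"
  unfolding schain_def by blast

lemma cval_remove: "cval D \<le> cval (D - {b}) + 1"
proof (cases "finite D")
  case True
  have "card D \<le> card (D - {b}) + 1"
  proof (cases "b \<in> D")
    case True
    then have "card D > 0" using \<open>finite D\<close> card_gt_0_iff by blast
    then show ?thesis using True \<open>finite D\<close> by (simp add: card_Diff_singleton_if)
  next
    case False then show ?thesis by simp
  qed
  then show ?thesis using True unfolding cval_def by (simp add: one_enat_def)
next
  case False
  then have "infinite (D - {b})" by simp
  then show ?thesis unfolding cval_def by simp
qed

lemma T_le_SS:
  assumes sg: "semigroup_on S f" and j: "j \<in> I" and y: "k \<in> I" "t \<in> S" "l \<in> I"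
  shows "R_le (brandt_carrier S I) (brandt_mult f) (Some (i, s, j)) (Some (k, t, l))
     \<longleftrightarrow> (Some (i, s, j) = Some (k, t, l) \<or> (i = k \<and> (\<exists>u\<in>S. s = f t u)))"
proof -
  have yT: "Some (k, t, l) \<in> brandt_carrier S I" using y unfolding brandt_carrier_def by auto
  have "R_le (brandt_carrier S I) (brandt_mult f) (Some (i, s, j)) (Some (k, t, l)) \<longleftrightarrow>
    (Some (i, s, j) = Some (k, t, l) \<or> (\<exists>z\<in>brandt_carrier S I. Some (i, s, j) = brandt_mult f (Some (k, t, l)) z))"
    by (rule rle_iff[OF brandt_semigroup[OF sg] yT])
  also have "\<dots> \<longleftrightarrow> (Some (i, s, j) = Some (k, t, l) \<or> (i = k \<and> (\<exists>u\<in>S. s = f t u)))"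
  proof -
    have "(\<exists>z\<in>brandt_carrier S I. Some (i, s, j) = brandt_mult f (Some (k, t, l)) z) \<longleftrightarrow> (i = k \<and> (\<exists>u\<in>S. s = f t u))"
    proof
      assume "\<exists>z\<in>brandt_carrier S I. Some (i, s, j) = brandt_mult f (Some (k, t, l)) z"
      then obtain z where z: "z \<in> brandt_carrier S I" "Some (i, s, j) = brandt_mult f (Some (k, t, l)) z" by blast
      show "i = k \<and> (\<exists>u\<in>S. s = f t u)"
      proof (cases rule: brandt_cases[OF z(1)])
        case 1 then show ?thesis using z by simp
      next
        case (2 p u q) then show ?thesis using z by (auto split: if_splits)
      qed
    next
      assume "i = k \<and> (\<exists>u\<in>S. s = f t u)"
      then obtain u where "i = k" "u \<in> S" "s = f t u" by blast
      then show "\<exists>z\<in>brandt_carrier S I. Some (i, s, j) = brandt_mult f (Some (k, t, l)) z"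
        using j y by (intro bexI[of _ "Some (l, u, j)"]) (auto simp: brandt_carrier_def)
    qed
    then show ?thesis by blast
  qed
  finally show ?thesis .
qed

lemma T_le_None:
  assumes sg: "semigroup_on S f" and y: "y \<in> brandt_carrier S I"
  shows "R_le (brandt_carrier S I) (brandt_mult f) None y"
proof -
  have N: "None \<in> brandt_carrier S I" unfolding brandt_carrier_def by simp
  have "brandt_mult f y None = None" by (cases y) auto
  then show ?thesis using rle_iff[OF brandt_semigroup[OF sg] y] N by metis
qed

lemma any_le_None:
  assumes sg: "semigroup_on X (brandt_mult f)" and N: "None \<in> X" and "R_le X (brandt_mult f) x None"
  shows "x = None"
  using assms rle_iff[OF sg N] by auto

lemma S_le:
  assumes "semigroup_on S f" "t \<in> S"
  shows "R_le S f s t \<longleftrightarrow> (s = t \<or> (\<exists>u\<in>S. s = f t u))"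
  using rle_iff[OF assms] .

lemma part1:
  assumes sg: "semigroup_on S f" and fin: "Hgt S (R_le S f) \<noteq> \<infinity>" and i1: "i1 \<in> I"
  shows "Hgt (brandt_carrier S I) (R_le (brandt_carrier S I) (brandt_mult f)) = Hgt S (R_le S f) + 1"
proof (rule order.antisym)
  let ?T = "brandt_carrier S I" and ?g = "brandt_mult f"
  have N: "None \<in> ?T" unfolding brandt_carrier_def by simp
  have sgT: "semigroup_on ?T ?g" by (rule brandt_semigroup[OF sg])
  show "Hgt ?T (R_le ?T ?g) \<le> Hgt S (R_le S f) + 1"
    unfolding Hgt_def[of ?T]
  proof (rule SUP_least)
    fix D assume D: "D \<in> schain ?T (R_le ?T ?g)"
    define D1 where "D1 = D - {None}"
    have D1: "D1 \<in> schain ?T (R_le ?T ?g)" unfolding D1_def by (rule schain_subset[OF D]) blast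
    have D1f: "\<exists>i s j. x = Some (i, s, j) \<and> i \<in> I \<and> s \<in> S \<and> j \<in> I" if "x \<in> D1" for x
      using that D unfolding D1_def schain_def brandt_carrier_def by auto
    define pr where "pr x = fst (snd (the x))" for x :: "('b \<times> 'a \<times> 'b) option"
    have tr: "pr ` D1 \<in> schain S (R_le S f) \<and> cval (pr ` D1) = cval D1"
    proof (rule transfer[OF D1])
      show "pr ` D1 \<subseteq> S" using D1f unfolding pr_def by force
      show "\<And>z. R_le S f z z" by (rule rle_refl)
      fix x y assume xy: "x \<in> D1" "y \<in> D1" "R_le ?T ?g x y" "\<not> R_le ?T ?g y x"
      obtain i s j where x: "x = Some (i, s, j)" "i \<in> I" "s \<in> S" "j \<in> I" using D1f xy(1) by blast
      obtain k t l where y: "y = Some (k, t, l)" "k \<in> I" "t \<in> S" "l \<in> I" using D1f xy(2) by blast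
      have a1: "x = y \<or> (i = k \<and> (\<exists>u\<in>S. s = f t u))" using xy(3) T_le_SS[OF sg x(4) y(2,3,4)] x y by simp
      have a2: "\<not> (y = x \<or> (k = i \<and> (\<exists>u\<in>S. t = f s u)))" using xy(4) T_le_SS[OF sg y(4) x(2,3,4)] x y by simp
      have "x \<noteq> y" using a2 by auto
      then obtain u where u: "u \<in> S" "s = f t u" "i = k" using a1 by auto
      have "s \<noteq> t" using a2 u by auto
      then show "R_le S f (pr x) (pr y) \<and> \<not> R_le S f (pr y) (pr x)"
        using S_le[OF sg y(3), of s] S_le[OF sg x(3), of t] a2 u x y unfolding pr_def by auto
    qed
    have "cval D \<le> cval D1 + 1" unfolding D1_def by (rule cval_remove)
    also have "\<dots> \<le> Hgt S (R_le S f) + 1" using tr Hgt_upper[of "pr ` D1" S "R_le S f"] by (simp add: add_right_mono)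
    finally show "cval D \<le> Hgt S (R_le S f) + 1" .
  qed
  obtain C where C: "C \<in> schain S (R_le S f)" "cval C = Hgt S (R_le S f)" using Hgt_attained[OF fin] by blast
  define emb where "emb s = Some (i1, s, i1)" for s :: 'a
  have CS: "C \<subseteq> S" using C unfolding schain_def by auto
  have tr: "emb ` C \<in> schain ?T (R_le ?T ?g) \<and> cval (emb ` C) = cval C"
  proof (rule transfer[OF C(1)])
    show "emb ` C \<subseteq> ?T" using CS i1 unfolding emb_def brandt_carrier_def by auto
    show "\<And>z. R_le ?T ?g z z" by (rule rle_refl)
    fix s t assume st: "s \<in> C" "t \<in> C" "R_le S f s t" "\<not> R_le S f t s"
    have s: "s \<in> S" and t: "t \<in> S" using st CS by auto
    have e1: "R_le ?T ?g (emb s) (emb t) \<longleftrightarrow> R_le S f s t"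
      using T_le_SS[OF sg i1 i1 t i1, of i1 s] S_le[OF sg t, of s] unfolding emb_def by simp
    have e2: "R_le ?T ?g (emb t) (emb s) \<longleftrightarrow> R_le S f t s"
      using T_le_SS[OF sg i1 i1 s i1, of i1 t] S_le[OF sg s, of t] unfolding emb_def by simp
    show "R_le ?T ?g (emb s) (emb t) \<and> \<not> R_le ?T ?g (emb t) (emb s)"
      using e1 e2 st by blast
  qed
  have ins: "insert None (emb ` C) \<in> schain ?T (R_le ?T ?g) \<and> cval (insert None (emb ` C)) = cval (emb ` C) + 1"
  proof (rule insert_bottom)
    show "emb ` C \<in> schain ?T (R_le ?T ?g)" using tr by blast
    show "None \<in> ?T" by (rule N)
    show "None \<notin> emb ` C" unfolding emb_def by auto
    fix y assume y: "y \<in> emb ` C"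
    then have yT: "y \<in> ?T" using tr unfolding schain_def by auto
    show "R_le ?T ?g None y \<and> \<not> R_le ?T ?g y None"
      using T_le_None[OF sg yT] any_le_None[OF sgT N, of y] y unfolding emb_def by auto
  qed
  show "Hgt S (R_le S f) + 1 \<le> Hgt ?T (R_le ?T ?g)"
    using ins tr C(2) Hgt_upper[of "insert None (emb ` C)" ?T "R_le ?T ?g"] by simp
qed


lemma B_char:
  assumes sg: "semigroup_on S f" and a: "a \<in> S" and i1: "i1 \<in> I"
  shows "x \<in> rideal1 (brandt_carrier S I) (brandt_mult f) (Some (i1, a, i1)) \<longleftrightarrow>
    (x = None \<or> x = Some (i1, a, i1) \<or> (\<exists>s l. x = Some (i1, s, l) \<and> s \<in> {f a u | u. u \<in> S} \<and> l \<in> I))"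
proof
  assume "x \<in> rideal1 (brandt_carrier S I) (brandt_mult f) (Some (i1, a, i1))"
  then consider "x = Some (i1, a, i1)" | z where "z \<in> brandt_carrier S I" "x = brandt_mult f (Some (i1, a, i1)) z"
    unfolding rideal1_def by blast
  then show "x = None \<or> x = Some (i1, a, i1) \<or> (\<exists>s l. x = Some (i1, s, l) \<and> s \<in> {f a u | u. u \<in> S} \<and> l \<in> I)"
  proof cases
    case 1 then show ?thesis by blast
  next
    case (2 z)
    show ?thesis
    proof (cases rule: brandt_cases[OF 2(1)])
      case 1 then show ?thesis using 2 by simp
    next
      case (2 p u q) then show ?thesis using \<open>x = brandt_mult f (Some (i1, a, i1)) z\<close> by auto
    qed
  qed
next
  assume h: "x = None \<or> x = Some (i1, a, i1) \<or> (\<exists>s l. x = Some (i1, s, l) \<and> s \<in> {f a u | u. u \<in> S} \<and> l \<in> I)"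
  have N: "None \<in> brandt_carrier S I" unfolding brandt_carrier_def by simp
  show "x \<in> rideal1 (brandt_carrier S I) (brandt_mult f) (Some (i1, a, i1))"
  proof (cases "x = None")
    case True
    then have "x = brandt_mult f (Some (i1, a, i1)) None" by simp
    then show ?thesis using N unfolding rideal1_def by blast
  next
    case False
    show ?thesis
    proof (cases "x = Some (i1, a, i1)")
      case True then show ?thesis unfolding rideal1_def by blast
    next
      case F2: False
      then obtain u l where ul: "x = Some (i1, f a u, l)" "u \<in> S" "l \<in> I" using h False by blast
      then have "x = brandt_mult f (Some (i1, a, i1)) (Some (i1, u, l))" "Some (i1, u, l) \<in> brandt_carrier S I"
        using i1 unfolding brandt_carrier_def by auto
      then show ?thesis unfolding rideal1_def by blast
    qed
  qed
qed


lemma aS_mult: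
  assumes sg: "semigroup_on S f" and a: "a \<in> S" and v: "v \<in> rideal1 S f a" and w: "w \<in> S"
  shows "f v w \<in> {f a u | u. u \<in> S}"
proof (cases "v = a")
  case True then show ?thesis using w by auto
next
  case False
  then obtain x where x: "x \<in> S" "v = f a x" using v unfolding rideal1_def by auto
  then have "f v w = f a (f x w)" "f x w \<in> S" using sg a w unfolding semigroup_on_def by auto
  then show ?thesis by blast
qed

lemma B_le1:
  assumes sg: "semigroup_on S f" and a: "a \<in> S" and i1: "i1 \<in> I"
    and s: "s \<in> rideal1 S f a" and t: "t \<in> rideal1 S f a"
  shows "R_le (rideal1 (brandt_carrier S I) (brandt_mult f) (Some (i1, a, i1))) (brandt_mult f) (Some (i1, s, i1)) (Some (i1, t, i1))
     \<longleftrightarrow> R_le (rideal1 S f a) f s t"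
proof -
  let ?B = "rideal1 (brandt_carrier S I) (brandt_mult f) (Some (i1, a, i1))"
  have a0: "Some (i1, a, i1) \<in> brandt_carrier S I" using a i1 unfolding brandt_carrier_def by auto
  have sgB: "semigroup_on ?B (brandt_mult f)" by (rule rideal_semigroup(1)[OF brandt_semigroup[OF sg] a0])
  have sgA: "semigroup_on (rideal1 S f a) f" by (rule rideal_semigroup(1)[OF sg a])
  have inB: "Some (i1, u, i1) \<in> ?B" if "u \<in> rideal1 S f a" for u
    using that B_char[OF sg a i1, of "Some (i1, u, i1)"] i1 unfolding rideal1_def by auto
  have "R_le ?B (brandt_mult f) (Some (i1, s, i1)) (Some (i1, t, i1)) \<longleftrightarrow>
     (Some (i1, s, i1) = Some (i1, t, i1) \<or> (\<exists>z\<in>?B. Some (i1, s, i1) = brandt_mult f (Some (i1, t, i1)) z))"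
    by (rule rle_iff[OF sgB inB[OF t]])
  also have "\<dots> \<longleftrightarrow> (s = t \<or> (\<exists>u\<in>rideal1 S f a. s = f t u))"
  proof -
    have "(\<exists>z\<in>?B. Some (i1, s, i1) = brandt_mult f (Some (i1, t, i1)) z) \<longleftrightarrow> (\<exists>u\<in>rideal1 S f a. s = f t u)"
    proof
      assume "\<exists>z\<in>?B. Some (i1, s, i1) = brandt_mult f (Some (i1, t, i1)) z"
      then obtain z where z: "z \<in> ?B" "Some (i1, s, i1) = brandt_mult f (Some (i1, t, i1)) z" by blast
      from z(1)[unfolded B_char[OF sg a i1]]
      consider "z = None" | "z = Some (i1, a, i1)" | u l where "z = Some (i1, f a u, l)" "u \<in> S" "l \<in> I" by blast
      then show "\<exists>u\<in>rideal1 S f a. s = f t u"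
      proof cases
        case 1 then show ?thesis using z by simp
      next
        case 2 then show ?thesis using z unfolding rideal1_def by auto
      next
        case (3 u l) then show ?thesis using z unfolding rideal1_def by (auto split: if_splits)
      qed
    next
      assume "\<exists>u\<in>rideal1 S f a. s = f t u"
      then obtain u where u: "u \<in> rideal1 S f a" "s = f t u" by blast
      show "\<exists>z\<in>?B. Some (i1, s, i1) = brandt_mult f (Some (i1, t, i1)) z"
        using inB[OF u(1)] u by (intro bexI[of _ "Some (i1, u, i1)"]) auto
    qed
    then show ?thesis by auto
  qed
  also have "\<dots> \<longleftrightarrow> R_le (rideal1 S f a) f s t" using rle_iff[OF sgA t] by simp
  finally show ?thesis .
qed

lemma B_le2:
  assumes sg: "semigroup_on S f" and a: "a \<in> S" and i1: "i1 \<in> I"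
    and x: "x = Some (i1, s, l)" "l \<noteq> i1" "x \<in> rideal1 (brandt_carrier S I) (brandt_mult f) (Some (i1, a, i1))"
  shows "R_le (rideal1 (brandt_carrier S I) (brandt_mult f) (Some (i1, a, i1))) (brandt_mult f) y x \<longleftrightarrow> (y = x \<or> y = None)"
proof -
  let ?B = "rideal1 (brandt_carrier S I) (brandt_mult f) (Some (i1, a, i1))"
  have a0: "Some (i1, a, i1) \<in> brandt_carrier S I" using a i1 unfolding brandt_carrier_def by auto
  have sgB: "semigroup_on ?B (brandt_mult f)" by (rule rideal_semigroup(1)[OF brandt_semigroup[OF sg] a0])
  have N: "None \<in> ?B" using B_char[OF sg a i1] by blast
  have "(\<exists>z\<in>?B. y = brandt_mult f x z) \<longleftrightarrow> y = None"
  proof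
    assume "\<exists>z\<in>?B. y = brandt_mult f x z"
    then obtain z where z: "z \<in> ?B" "y = brandt_mult f x z" by blast
    from z(1)[unfolded B_char[OF sg a i1]]
    consider "z = None" | "z = Some (i1, a, i1)" | u l' where "z = Some (i1, f a u, l')" by blast
    then show "y = None" using z x by cases auto
  next
    assume "y = None" then show "\<exists>z\<in>?B. y = brandt_mult f x z" using N x by (intro bexI[of _ None]) auto
  qed
  then show ?thesis using rle_iff[OF sgB x(3)] by blast
qed

lemma B_None:
  assumes sg: "semigroup_on S f" and a: "a \<in> S" and i1: "i1 \<in> I"
    and y: "y \<in> rideal1 (brandt_carrier S I) (brandt_mult f) (Some (i1, a, i1))"
  shows "R_le (rideal1 (brandt_carrier S I) (brandt_mult f) (Some (i1, a, i1))) (brandt_mult f) None y"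
proof -
  let ?B = "rideal1 (brandt_carrier S I) (brandt_mult f) (Some (i1, a, i1))"
  have a0: "Some (i1, a, i1) \<in> brandt_carrier S I" using a i1 unfolding brandt_carrier_def by auto
  have sgB: "semigroup_on ?B (brandt_mult f)" by (rule rideal_semigroup(1)[OF brandt_semigroup[OF sg] a0])
  have N: "None \<in> ?B" using B_char[OF sg a i1] by blast
  have "brandt_mult f y None = None" by (cases y) auto
  then show ?thesis using rle_iff[OF sgB y] N by metis
qed



lemma inB:
  assumes sg: "semigroup_on S f" and a: "a \<in> S" and i1: "i1 \<in> I" and u: "u \<in> rideal1 S f a"
  shows "Some (i1, u, i1) \<in> rideal1 (brandt_carrier S I) (brandt_mult f) (Some (i1, a, i1))"
proof -
  have "u = a \<or> u \<in> {f a u | u. u \<in> S}" using u unfolding rideal1_def by blast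
  then show ?thesis unfolding B_char[OF sg a i1] using i1 by blast
qed

lemma Bform:
  assumes sg: "semigroup_on S f" and a: "a \<in> S" and i1: "i1 \<in> I"
    and x: "x \<in> rideal1 (brandt_carrier S I) (brandt_mult f) (Some (i1, a, i1))"
  shows "x = None \<or> (\<exists>s l. x = Some (i1, s, l) \<and> s \<in> rideal1 S f a \<and> l \<in> I)"
proof -
  have h: "x = None \<or> x = Some (i1, a, i1) \<or> (\<exists>s l. x = Some (i1, s, l) \<and> s \<in> {f a u | u. u \<in> S} \<and> l \<in> I)"
    using x unfolding B_char[OF sg a i1] .
  then show ?thesis using i1 unfolding rideal1_def by blast
qed

lemma B_None_in:
  assumes sg: "semigroup_on S f" and a: "a \<in> S" and i1: "i1 \<in> I"
  shows "None \<in> rideal1 (brandt_carrier S I) (brandt_mult f) (Some (i1, a, i1))"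
  by (simp add: B_char[OF sg a i1])


lemma part2_up:
  assumes sg: "semigroup_on S f" and a: "a \<in> S" and i1: "i1 \<in> I"
  shows "Hgt (rideal1 (brandt_carrier S I) (brandt_mult f) (Some (i1, a, i1)))
             (R_le (rideal1 (brandt_carrier S I) (brandt_mult f) (Some (i1, a, i1))) (brandt_mult f))
         \<le> Hgt (rideal1 S f a) (R_le (rideal1 S f a) f) + 2"
  unfolding Hgt_def[of "rideal1 (brandt_carrier S I) (brandt_mult f) (Some (i1, a, i1))"]
proof (rule SUP_least)
  let ?B = "rideal1 (brandt_carrier S I) (brandt_mult f) (Some (i1, a, i1))"
  let ?A = "rideal1 S f a"
  let ?g = "brandt_mult f"
  fix D assume D: "D \<in> schain ?B (R_le ?B ?g)"
  have DB: "\<And>x. x \<in> D \<Longrightarrow> x \<in> ?B" using D unfolding schain_def by auto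
  have DF: "\<And>x. x \<in> D \<Longrightarrow> x = None \<or> (\<exists>s l. x = Some (i1, s, l) \<and> s \<in> ?A \<and> l \<in> I)"
    using Bform[OF sg a i1 DB] by blast
  obtain e where e: "\<And>x. x \<in> D \<Longrightarrow> x = None \<or> x = e \<or> (\<exists>s. x = Some (i1, s, i1))"
  proof (cases "\<exists>x\<in>D. \<exists>s l. x = Some (i1, s, l) \<and> l \<noteq> i1")
    case True
    then obtain e s0 l0 where e0: "e \<in> D" "e = Some (i1, s0, l0)" "l0 \<noteq> i1" by blast
    have eB: "e \<in> ?B" using e0(1) DB by blast
    have "x = None \<or> x = e \<or> (\<exists>s. x = Some (i1, s, i1))" if x: "x \<in> D" for x
    proof -
      have xB: "x \<in> ?B" using DB x by blast
      have False if xs: "x = Some (i1, s, l)" "l \<noteq> i1" "x \<noteq> e" for s l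
      proof -
        have "R_le ?B ?g x e \<or> R_le ?B ?g e x" by (rule schain_cmp[OF D x e0(1) xs(3)])
        moreover have "\<not> R_le ?B ?g x e" using B_le2[OF sg a i1 e0(2,3) eB, of x] xs by simp
        moreover have "\<not> R_le ?B ?g e x" using B_le2[OF sg a i1 xs(1,2) xB, of e] xs e0(2) by auto
        ultimately show False by blast
      qed
      note F = this
      from DF[OF x] show ?thesis
      proof
        assume "x = None" then show ?thesis by simp
      next
        assume "\<exists>s l. x = Some (i1, s, l) \<and> s \<in> ?A \<and> l \<in> I"
        then obtain s l where xs: "x = Some (i1, s, l)" by auto
        show ?thesis
        proof (cases "l = i1")
          case True then show ?thesis using xs by simp
        next
          case False then show ?thesis using F[OF xs False] by auto
        qed
      qed
    qed
    then show ?thesis by (rule that)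
  next
    case False
    have "x = None \<or> x = None \<or> (\<exists>s. x = Some (i1, s, i1))" if x: "x \<in> D" for x
    proof -
      note F = False
      from DF[OF x] show ?thesis
      proof
        assume "x = None" then show ?thesis by simp
      next
        assume "\<exists>s l. x = Some (i1, s, l) \<and> s \<in> ?A \<and> l \<in> I"
        then obtain s l where xs: "x = Some (i1, s, l)" by auto
        show ?thesis
        proof (cases "l = i1")
          case True then show ?thesis using xs by simp
        next
          case False then show ?thesis using F x xs by auto
        qed
      qed
    qed
    then show ?thesis by (rule that)
  qed
  define D1 where "D1 = D - {None} - {e}"
  have D1: "D1 \<in> schain ?B (R_le ?B ?g)" unfolding D1_def by (rule schain_subset[OF D]) blast
  have D1f: "\<exists>s. x = Some (i1, s, i1) \<and> s \<in> ?A" if "x \<in> D1" for x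
  proof -
    have xD: "x \<in> D" "x \<noteq> None" "x \<noteq> e" using that unfolding D1_def by auto
    obtain s where s: "x = Some (i1, s, i1)" using e[OF xD(1)] xD by auto
    then show ?thesis using DF[OF xD(1)] by auto
  qed
  define pr where "pr x = fst (snd (the x))" for x :: "('b \<times> 'a \<times> 'b) option"
  have tr: "pr ` D1 \<in> schain ?A (R_le ?A f) \<and> cval (pr ` D1) = cval D1"
  proof (rule transfer[OF D1])
    show "pr ` D1 \<subseteq> ?A" using D1f unfolding pr_def by force
    show "\<And>z. R_le ?A f z z" by (rule rle_refl)
    fix x y assume xy: "x \<in> D1" "y \<in> D1" "R_le ?B ?g x y" "\<not> R_le ?B ?g y x"
    obtain s where x: "x = Some (i1, s, i1)" "s \<in> ?A" using D1f xy(1) by blast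
    obtain t where y: "y = Some (i1, t, i1)" "t \<in> ?A" using D1f xy(2) by blast
    show "R_le ?A f (pr x) (pr y) \<and> \<not> R_le ?A f (pr y) (pr x)"
      using B_le1[OF sg a i1 x(2) y(2)] B_le1[OF sg a i1 y(2) x(2)] xy x y unfolding pr_def by simp
  qed
  have "cval D \<le> cval (D - {None}) + 1" by (rule cval_remove)
  also have "\<dots> \<le> (cval D1 + 1) + 1" unfolding D1_def by (rule add_right_mono) (rule cval_remove)
  also have "\<dots> = cval D1 + 2" by (simp add: add.assoc one_add_one)
  also have "\<dots> \<le> Hgt ?A (R_le ?A f) + 2" using tr Hgt_upper[of "pr ` D1" ?A "R_le ?A f"] by (simp add: add_right_mono)
  finally show "cval D \<le> Hgt ?A (R_le ?A f) + 2" .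
qed


lemma part2_emb:
  assumes sg: "semigroup_on S f" and a: "a \<in> S" and i1: "i1 \<in> I"
    and C: "C \<in> schain (rideal1 S f a) (R_le (rideal1 S f a) f)"
  shows "(\<lambda>s. Some (i1, s, i1)) ` C \<in> schain (rideal1 (brandt_carrier S I) (brandt_mult f) (Some (i1, a, i1)))
             (R_le (rideal1 (brandt_carrier S I) (brandt_mult f) (Some (i1, a, i1))) (brandt_mult f))
     \<and> cval ((\<lambda>s. Some (i1, s, i1)) ` C) = cval C"
proof (rule transfer[OF C])
  let ?B = "rideal1 (brandt_carrier S I) (brandt_mult f) (Some (i1, a, i1))"
  let ?A = "rideal1 S f a"
  have CA: "\<And>s. s \<in> C \<Longrightarrow> s \<in> ?A" using C unfolding schain_def by auto
  show "(\<lambda>s. Some (i1, s, i1)) ` C \<subseteq> ?B" using inB[OF sg a i1 CA] by auto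
  show "\<And>z. R_le ?B (brandt_mult f) z z" by (rule rle_refl)
  fix s t assume st: "s \<in> C" "t \<in> C" "R_le ?A f s t" "\<not> R_le ?A f t s"
  then show "R_le ?B (brandt_mult f) (Some (i1, s, i1)) (Some (i1, t, i1)) \<and> \<not> R_le ?B (brandt_mult f) (Some (i1, t, i1)) (Some (i1, s, i1))"
    using B_le1[OF sg a i1 CA[OF st(1)] CA[OF st(2)]] B_le1[OF sg a i1 CA[OF st(2)] CA[OF st(1)]] by simp
qed

lemma part2_mono:
  assumes sg: "semigroup_on S f" and a: "a \<in> S" and i1: "i1 \<in> I"
  shows "Hgt (rideal1 S f a) (R_le (rideal1 S f a) f) \<le>
         Hgt (rideal1 (brandt_carrier S I) (brandt_mult f) (Some (i1, a, i1)))
             (R_le (rideal1 (brandt_carrier S I) (brandt_mult f) (Some (i1, a, i1))) (brandt_mult f))"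
  unfolding Hgt_def[of "rideal1 S f a"]
proof (rule SUP_least)
  fix C assume C: "C \<in> schain (rideal1 S f a) (R_le (rideal1 S f a) f)"
  note E = part2_emb[OF sg a i1 C]
  show "cval C \<le> Hgt (rideal1 (brandt_carrier S I) (brandt_mult f) (Some (i1, a, i1)))
             (R_le (rideal1 (brandt_carrier S I) (brandt_mult f) (Some (i1, a, i1))) (brandt_mult f))"
    using Hgt_upper[OF conjunct1[OF E]] conjunct2[OF E] by simp
qed

lemma min_idem:
  assumes sg: "semigroup_on S f" and a: "a \<in> S"
    and fin: "Hgt (rideal1 S f a) (R_le (rideal1 S f a) f) \<noteq> \<infinity>"
  obtains C m w where "C \<in> schain (rideal1 S f a) (R_le (rideal1 S f a) f)"
    "cval C = Hgt (rideal1 S f a) (R_le (rideal1 S f a) f)"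
    "m \<in> C" "\<And>c. c \<in> C \<Longrightarrow> R_le (rideal1 S f a) f m c" "w \<in> S" "m = f m (f a w)"
proof -
  let ?A = "rideal1 S f a"
  have sgA: "semigroup_on ?A f" by (rule rideal_semigroup(1)[OF sg a])
  have AS: "?A \<subseteq> S" by (rule rideal_semigroup(2)[OF sg a])
  have aA: "a \<in> ?A" unfolding rideal1_def by simp
  obtain C where C: "C \<in> schain ?A (R_le ?A f)" "cval C = Hgt ?A (R_le ?A f)" using Hgt_attained[OF fin] by blast
  have CA: "\<And>c. c \<in> C \<Longrightarrow> c \<in> ?A" using C unfolding schain_def by auto
  have "{a} \<in> schain ?A (R_le ?A f)" using aA unfolding schain_def by auto
  then have "cval {a} \<le> cval C" using C(2) Hgt_upper by metis
  then have Cne: "C \<noteq> {}" unfolding cval_def by (auto simp: one_enat_def)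
  have Cfin: "finite C" using C fin unfolding cval_def by (auto split: if_splits)
  have tot: "\<forall>x\<in>C. \<forall>y\<in>C. R_le ?A f x y \<or> R_le ?A f y x"
  proof (intro ballI)
    fix x y assume "x \<in> C" "y \<in> C"
    then show "R_le ?A f x y \<or> R_le ?A f y x" using schain_cmp[OF C(1)] rle_refl by metis
  qed
  obtain m where m: "m \<in> C" "\<forall>c\<in>C. R_le ?A f m c"
  proof -
    have "\<exists>m\<in>C. \<forall>c\<in>C. R_le ?A f m c"
      by (rule exists_min[OF Cfin Cne tot]) (unfold R_le_def, blast+)
    then show ?thesis using that by blast
  qed
  have mA: "m \<in> ?A" using CA m by auto
  have mS: "m \<in> S" using mA AS by auto
  have fA: "f (f x y) z = f x (f y z)" if "x \<in> S" "y \<in> S" "z \<in> S" for x y z using sg that unfolding semigroup_on_def by blast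
  have "\<exists>w\<in>S. m = f m (f a w)"
  proof -
    define m' where "m' = f m a"
    have m'A: "m' \<in> ?A" using sgA mA aA unfolding m'_def semigroup_on_def by blast
    have m'm: "R_le ?A f m' m" using rle_iff[OF sgA mA] aA unfolding m'_def by blast
    show ?thesis
    proof (cases "R_le ?A f m m'")
      case True
      then consider "m = m'" | v where "v \<in> ?A" "m = f m' v" using rle_iff[OF sgA m'A] by blast
      then show ?thesis
      proof cases
        case 1
        then have "m = f m (f a a)" using fA[OF mS a a] unfolding m'_def by metis
        then show ?thesis using a by blast
      next
        case (2 v)
        then have "v \<in> S" using AS by auto
        then have "m = f m (f a v)" using 2 fA[OF mS a] unfolding m'_def by metis
        then show ?thesis using \<open>v \<in> S\<close> by blast
      qed
    next
      case False
      have ins: "insert m' C \<in> schain ?A (R_le ?A f) \<and> cval (insert m' C) = cval C + 1"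
      proof (rule insert_bottom[OF C(1) m'A])
        show "m' \<notin> C" using False m by auto
        fix y assume "y \<in> C"
        then show "R_le ?A f m' y \<and> \<not> R_le ?A f y m'" using m m'm False rle_trans by metis
      qed
      then have "cval C + 1 \<le> cval C" using C(2) Hgt_upper by metis
      then show ?thesis using Cfin unfolding cval_def by (simp add: one_enat_def)
    qed
  qed
  then obtain w where "w \<in> S" "m = f m (f a w)" by blast
  then show ?thesis using that C m by blast
qed


lemma part2_low:
  assumes sg: "semigroup_on S f" and a: "a \<in> S" and i1: "i1 \<in> I" and j0: "j0 \<in> I" "j0 \<noteq> i1"
    and fin: "Hgt (rideal1 S f a) (R_le (rideal1 S f a) f) \<noteq> \<infinity>"
  shows "Hgt (rideal1 S f a) (R_le (rideal1 S f a) f) + 2 \<le>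
         Hgt (rideal1 (brandt_carrier S I) (brandt_mult f) (Some (i1, a, i1)))
             (R_le (rideal1 (brandt_carrier S I) (brandt_mult f) (Some (i1, a, i1))) (brandt_mult f))"
proof -
  let ?B = "rideal1 (brandt_carrier S I) (brandt_mult f) (Some (i1, a, i1))"
  let ?A = "rideal1 S f a"
  let ?g = "brandt_mult f"
  let ?aS = "{f a u | u. u \<in> S}"
  obtain C m w where C: "C \<in> schain ?A (R_le ?A f)" "cval C = Hgt ?A (R_le ?A f)"
    and m: "m \<in> C" "\<And>c. c \<in> C \<Longrightarrow> R_le ?A f m c" and w: "w \<in> S" "m = f m (f a w)"
    using min_idem[OF sg a fin] by blast
  have a0: "Some (i1, a, i1) \<in> brandt_carrier S I" using a i1 unfolding brandt_carrier_def by auto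
  have sgB: "semigroup_on ?B ?g" by (rule rideal_semigroup(1)[OF brandt_semigroup[OF sg] a0])
  have sgA: "semigroup_on ?A f" by (rule rideal_semigroup(1)[OF sg a])
  have AS: "?A \<subseteq> S" by (rule rideal_semigroup(2)[OF sg a])
  have N: "None \<in> ?B" by (rule B_None_in[OF sg a i1])
  have CA: "\<And>c. c \<in> C \<Longrightarrow> c \<in> ?A" using C unfolding schain_def by auto
  have mA: "m \<in> ?A" using CA m by auto
  have fS: "f x y \<in> S" if "x \<in> S" "y \<in> S" for x y using sg that unfolding semigroup_on_def by blast
  have fA: "f (f x y) z = f x (f y z)" if "x \<in> S" "y \<in> S" "z \<in> S" for x y z using sg that unfolding semigroup_on_def by blast
  let ?w = "f a w"
  have wS: "?w \<in> S" using fS a w by auto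
  have waS: "?w \<in> ?aS" using w by blast
  have maS: "m \<in> ?aS"
  proof (cases "m = a")
    case True then have "m = f a ?w" using w by simp
    then show ?thesis using wS by blast
  next
    case False then show ?thesis using mA unfolding rideal1_def by auto
  qed
  define e where "e = Some (i1, m, j0)"
  have eB: "e \<in> ?B" unfolding e_def B_char[OF sg a i1] using maS j0 by blast
  define emb where "emb = ((\<lambda>s. Some (i1, s, i1)) :: 'a \<Rightarrow> _)"
  have D0: "emb ` C \<in> schain ?B (R_le ?B ?g) \<and> cval (emb ` C) = cval C"
    unfolding emb_def by (rule part2_emb[OF sg a i1 C(1)])
  have D1: "insert e (emb ` C) \<in> schain ?B (R_le ?B ?g) \<and> cval (insert e (emb ` C)) = cval (emb ` C) + 1"
  proof (rule insert_bottom[OF conjunct1[OF D0] eB])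
    show "e \<notin> emb ` C" unfolding e_def emb_def using j0 by auto
    fix y assume "y \<in> emb ` C"
    then obtain c where c: "c \<in> C" "y = Some (i1, c, i1)" unfolding emb_def by auto
    have cA: "c \<in> ?A" using c CA by auto
    have cS: "c \<in> S" using cA AS by auto
    have yB: "y \<in> ?B" using inB[OF sg a i1 cA] c by simp
    have "\<exists>u\<in>?aS. m = f c u"
    proof -
      have "m = c \<or> (\<exists>v\<in>?A. m = f c v)" using rle_iff[OF sgA cA] m(2)[OF c(1)] by blast
      then show ?thesis
      proof
        assume "m = c" then show ?thesis using w waS by auto
      next
        assume "\<exists>v\<in>?A. m = f c v"
        then obtain v where v: "v \<in> ?A" "m = f c v" by blast
        then have vS: "v \<in> S" using AS by auto
        have "m = f c (f v ?w)" using v w fA[OF cS vS wS] by metis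
        moreover have "f v ?w \<in> ?aS" by (rule aS_mult[OF sg a v(1) wS])
        ultimately show ?thesis by blast
      qed
    qed
    then obtain u where u: "u \<in> ?aS" "m = f c u" by blast
    have zB: "Some (i1, u, j0) \<in> ?B" unfolding B_char[OF sg a i1] using u j0 by blast
    have "e = ?g y (Some (i1, u, j0))" using u c unfolding e_def by simp
    then have "R_le ?B ?g e y" using rle_iff[OF sgB yB] zB by blast
    moreover have "\<not> R_le ?B ?g y e" using B_le2[OF sg a i1 e_def j0(2) eB, of y] c e_def j0 by auto
    ultimately show "R_le ?B ?g e y \<and> \<not> R_le ?B ?g y e" by blast
  qed
  have D2: "insert None (insert e (emb ` C)) \<in> schain ?B (R_le ?B ?g) \<and>
      cval (insert None (insert e (emb ` C))) = cval (insert e (emb ` C)) + 1"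
  proof (rule insert_bottom[OF conjunct1[OF D1] N])
    show "None \<notin> insert e (emb ` C)" unfolding e_def emb_def by auto
    fix y assume y: "y \<in> insert e (emb ` C)"
    have yB: "y \<in> ?B" using y eB inB[OF sg a i1 CA] unfolding emb_def by auto
    have "y \<noteq> None" using y unfolding e_def emb_def by auto
    then show "R_le ?B ?g None y \<and> \<not> R_le ?B ?g y None"
      using B_None[OF sg a i1 yB] any_le_None[OF sgB N, of y] by auto
  qed
  have "Hgt ?A (R_le ?A f) + 2 = cval (insert None (insert e (emb ` C)))"
    using D2 D1 D0 C(2) by (simp add: add.assoc one_add_one)
  also have "\<dots> \<le> Hgt ?B (R_le ?B ?g)" by (rule Hgt_upper[OF conjunct1[OF D2]])
  finally show ?thesis .
qed

lemma part2:
  assumes sg: "semigroup_on S f" and a: "a \<in> S" and i1: "i1 \<in> I" and j0: "j0 \<in> I" "j0 \<noteq> i1"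
  shows "Hgt (rideal1 (brandt_carrier S I) (brandt_mult f) (Some (i1, a, i1)))
             (R_le (rideal1 (brandt_carrier S I) (brandt_mult f) (Some (i1, a, i1))) (brandt_mult f))
         = Hgt (rideal1 S f a) (R_le (rideal1 S f a) f) + 2"
proof (cases "Hgt (rideal1 S f a) (R_le (rideal1 S f a) f) = \<infinity>")
  case True
  then show ?thesis using part2_mono[OF sg a i1] by simp
next
  case False
  show ?thesis using part2_up[OF sg a i1] part2_low[OF sg a i1 j0 False] by (rule order.antisym)
qed

theorem theorem4p5:
  fixes S :: "'a set" and f :: "'a \<Rightarrow> 'a \<Rightarrow> 'a" and a :: 'a
    and I :: "'i set" and i1 :: 'i
  assumes "semigroup_on S f"
    and "R_height S f \<noteq> \<infinity>"
    and "a \<in> S"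
    and "i1 \<in> I" and "\<exists>j\<in>I. j \<noteq> i1"
  shows "R_height (brandt_carrier S I) (brandt_mult f) = R_height S f + 1
       \<and> R_height (rideal1 (brandt_carrier S I) (brandt_mult f) (Some (i1, a, i1))) (brandt_mult f)
           = R_height (rideal1 S f a) f + 2"
proof -
  obtain j0 where j0: "j0 \<in> I" "j0 \<noteq> i1" using assms(5) by blast
  show ?thesis
    unfolding R_height_eq
    using part1[OF assms(1) assms(2)[unfolded R_height_eq] assms(4)] part2[OF assms(1) assms(3) assms(4) j0]
    by blast
qed

end
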